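(* Let $S,C,D,\Delta\ge1$, $\mathcal{X}\subseteq\mathbb{R}^D$ nonempty convex compact, and $f_h$, $h=1,\dots,C$, convex continuously differentiable with gradients $g_h$ satisfying $\|g_h(x)\|\le L_h$ on $\mathcal{X}$. Suppose the weights $W_{i,k}[J,h]\ge0$ are nonnegative and satisfy SLC with constant $M>0$, the server graph is complete (consensus step $x^I_{0,k+1}=\frac1S\sum_{J=1}^S x^J_{\Delta,k}$), all servers start from the same point $x^J_{0,0}=x_{0,0}\in\mathcal{X}$, and the step sizes satisfy $\alpha_k>0$, $\lim_{k\to\infty}\alpha_k=0$ and $\sum_{k=0}^\infty\alpha_k=\infty$. Let $x_{0,k}$ denote the common value of $x^J_{0,k}$ over $J$. Then $$\lim_{k\to\infty}\mathrm{dist}(x_{0,k},\mathcal{X}^* )=0\quad\text{and}\quad\lim_{k\to\infty}f(x_{0,k})=f^*.$$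
   Context: $\mathcal{P}_{\mathcal{X}}$ is Euclidean projection onto $\mathcal{X}$; $f=\sum_{h=1}^Cf_h$, $f^*=\min_{x\in\mathcal{X}}f(x)$, $\mathcal{X}^*=\{x\in\mathcal{X}:f(x)=f^*\}$, $\mathrm{dist}(x,\mathcal{X}^* )=\inf_{x^*\in\mathcal{X}^*}\|x-x^*\|$ (Euclidean norm). Weight matrices $W_{i,k}\in\mathbb{R}^{S\times C}$ ($0\le i\le\Delta-1$, $k\ge0$). Symmetric Learning Condition (SLC): there is $M>0$ with $\sum_{i=1}^{\Delta}\sum_{J=1}^S W_{i-1,k}[J,h]=M$ for all $k\ge0$ and all $h$. Iteration: for each $k\ge0$ and $i=1,\dots,\Delta$, $x^J_{i,k}=\mathcal{P}_{\mathcal{X}}\big[x^J_{i-1,k}-\alpha_k\sum_{h=1}^C W_{i-1,k}[J,h]\,g_h(x^J_{i-1,k})\big]$, followed by the consensus step. *)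

theory Defs
  imports "HOL-Analysis.Analysis"
begin

definition total_obj :: "nat \<Rightarrow> (nat \<Rightarrow> 'a \<Rightarrow> real) \<Rightarrow> 'a \<Rightarrow> real" where
  "total_obj C f x = (\<Sum>h<C. f h x)"

definition opt_val :: "'a set \<Rightarrow> ('a \<Rightarrow> real) \<Rightarrow> real" where
  "opt_val X F = Inf (F ` X)"

definition opt_set :: "'a set \<Rightarrow> ('a \<Rightarrow> real) \<Rightarrow> 'a set" where
  "opt_set X F = {x \<in> X. F x = opt_val X F}"

end

theory Submission imports Defs begin

lemma grad_ineq:
  fixes f :: "'a::real_inner \<Rightarrow> real"
  assumes cvx: "convex_on UNIV f" and der: "(f has_derivative (\<lambda>v. gp \<bullet> v)) (at p)"
  shows "f y \<ge> f p + gp \<bullet> (y - p)"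
proof -
  define d where "d = y - p"
  define \<phi> where "\<phi> t = f (p + t *\<^sub>R d)" for t :: real
  have lin: "((\<lambda>t::real. p + t *\<^sub>R d) has_derivative (\<lambda>t. t *\<^sub>R d)) (at 0)"
    by (auto intro!: derivative_eq_intros)
  have "((\<lambda>t. f (p + t *\<^sub>R d)) has_derivative (\<lambda>t. gp \<bullet> (t *\<^sub>R d))) (at 0)"
    using has_derivative_compose[OF lin, of f "\<lambda>v. gp \<bullet> v"] der by (simp add: o_def)
  hence D: "(\<phi> has_field_derivative (gp \<bullet> d)) (at 0 within UNIV)"
    unfolding has_field_derivative_def \<phi>_def
    by (rule has_derivative_eq_rhs) (auto simp: fun_eq_iff)
  have C: "convex_on UNIV \<phi>"
  proof (rule convex_onI)
    fix t s1 s2 :: real assume t: "0 < t" "t < 1"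
    have "\<phi> ((1 - t) *\<^sub>R s1 + t *\<^sub>R s2) = f ((1-t) *\<^sub>R (p + s1 *\<^sub>R d) + t *\<^sub>R (p + s2 *\<^sub>R d))"
      unfolding \<phi>_def by (simp add: algebra_simps)
    also have "\<dots> \<le> (1-t) * \<phi> s1 + t * \<phi> s2"
      unfolding \<phi>_def using convex_onD[OF cvx] t by simp
    finally show "\<phi> ((1 - t) *\<^sub>R s1 + t *\<^sub>R s2) \<le> (1 - t) * \<phi> s1 + t * \<phi> s2" .
  qed simp
  have "\<phi> 1 - \<phi> 0 \<ge> (gp \<bullet> d) * (1 - 0)"
    by (rule convex_on_imp_above_tangent[OF C]) (use D in auto)
  thus ?thesis unfolding \<phi>_def d_def by simp
qed

lemma convex_norm2: "convex_on UNIV (\<lambda>x::'a::real_normed_vector. (norm x)^2)"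
proof (rule convex_onI)
  fix t :: real and x y :: 'a assume t: "0 < t" "t < 1"
  have "norm ((1 - t) *\<^sub>R x + t *\<^sub>R y) \<le> (1-t) * norm x + t * norm y"
  proof -
    have "norm ((1 - t) *\<^sub>R x + t *\<^sub>R y) \<le> norm ((1 - t) *\<^sub>R x) + norm (t *\<^sub>R y)"
      by (rule norm_triangle_ineq)
    also have "\<dots> = (1-t) * norm x + t * norm y" using t by simp
    finally show ?thesis .
  qed
  hence "(norm ((1 - t) *\<^sub>R x + t *\<^sub>R y))^2 \<le> ((1-t) * norm x + t * norm y)^2"
    by (rule power_mono) simp
  also have "\<dots> \<le> (1-t) * (norm x)^2 + t * (norm y)^2"
    using convex_onD[OF convex_power2, of t "norm x" "norm y"] t by simp
  finally show "(norm ((1 - t) *\<^sub>R x + t *\<^sub>R y))^2 \<le> (1-t) * (norm x)^2 + t * (norm y)^2" .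
qed simp

lemma round_lemma:
  fixes y :: "nat \<Rightarrow> 'a::euclidean_space" and g :: "nat \<Rightarrow> 'a \<Rightarrow> 'a"
  assumes X: "convex X" "closed X" "X \<noteq> {}"
    and p: "p \<in> X" and y0: "y 0 = p"
    and ys: "\<And>i. i < n \<Longrightarrow> y (Suc i) = closest_point X (y i - a *\<^sub>R (\<Sum>h<C. w i h *\<^sub>R g h (y i)))"
    and a: "a \<ge> 0"
    and w: "\<And>i h. i < n \<Longrightarrow> h < C \<Longrightarrow> w i h \<ge> 0"
    and B: "\<And>i. i < n \<Longrightarrow> (\<Sum>h<C. w i h * L h) \<le> B"
    and gi: "\<And>h u v. h < C \<Longrightarrow> f h v \<ge> f h u + g h u \<bullet> (v - u)"
    and gb: "\<And>h u. h < C \<Longrightarrow> u \<in> X \<Longrightarrow> norm (g h u) \<le> L h"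
  shows "\<forall>i\<le>n. y i \<in> X"
    and "\<forall>i\<le>n. norm (y i - p) \<le> i * a * B"
    and "q \<in> X \<Longrightarrow> (norm (y n - q))^2 \<le> (norm (p - q))^2
           - 2 * a * (\<Sum>i<n. \<Sum>h<C. w i h * (f h p - f h q)) + real n * a^2 * ((2 * real n + 1) * B^2)"
proof -
  define v where "v i = (\<Sum>h<C. w i h *\<^sub>R g h (y i))" for i
  have ys': "y (Suc i) = closest_point X (y i - a *\<^sub>R v i)" if "i < n" for i
    using ys[OF that] v_def by simp
  show inX: "\<forall>i\<le>n. y i \<in> X"
  proof (intro allI impI)
    fix i assume "i \<le> n" thus "y i \<in> X"
      by (cases i) (use p y0 ys' closest_point_in_set X in auto)
  qed
  have vb: "norm (v i) \<le> (\<Sum>h<C. w i h * L h)" if "i < n" for i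
  proof -
    have "norm (v i) \<le> (\<Sum>h<C. norm (w i h *\<^sub>R g h (y i)))" unfolding v_def by (rule norm_sum)
    also have "\<dots> \<le> (\<Sum>h<C. w i h * L h)"
    proof (rule sum_mono)
      fix h assume "h \<in> {..<C}"
      thus "norm (w i h *\<^sub>R g h (y i)) \<le> w i h * L h"
        using w[OF that, of h] gb[of h "y i"] inX that
        by (auto intro!: mult_left_mono)
    qed
    finally show ?thesis .
  qed
  have vB: "norm (v i) \<le> B" if "i < n" for i using vb[OF that] B[OF that] by linarith
  have step: "norm (y (Suc i) - y i) \<le> a * B" if "i < n" for i
  proof -
    have "norm (y (Suc i) - y i) = dist (closest_point X (y i - a *\<^sub>R v i)) (closest_point X (y i))"
      using ys'[OF that] closest_point_self[of "y i" X] inX that by (simp add: dist_norm)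
    also have "\<dots> \<le> dist (y i - a *\<^sub>R v i) (y i)" by (rule closest_point_lipschitz[OF X])
    also have "\<dots> = a * norm (v i)" using a by (simp add: dist_norm)
    also have "\<dots> \<le> a * B" using vB[OF that] a by (simp add: mult_left_mono)
    finally show ?thesis .
  qed
  show dist: "\<forall>i\<le>n. norm (y i - p) \<le> i * a * B"
  proof (intro allI impI)
    fix i show "i \<le> n \<Longrightarrow> norm (y i - p) \<le> i * a * B"
    proof (induction i)
      case 0 thus ?case using y0 by simp
    next
      case (Suc i)
      have "norm (y (Suc i) - p) \<le> norm (y (Suc i) - y i) + norm (y i - p)"
        by (rule order_trans[OF _ norm_triangle_ineq]) simp
      also have "\<dots> \<le> a * B + i * a * B" using Suc step[of i] by force
      finally show ?case by (simp add: algebra_simps)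
    qed
  qed
  show "q \<in> X \<Longrightarrow> (norm (y n - q))^2 \<le> (norm (p - q))^2
           - 2 * a * (\<Sum>i<n. \<Sum>h<C. w i h * (f h p - f h q)) + real n * a^2 * ((2 * real n + 1) * B^2)"
  proof -
  assume q: "q \<in> X"
  have B0: "B \<ge> 0" if "0 < n" using vB[OF that] norm_ge_zero order_trans by blast
  define K where "K = (2 * real n + 1) * B^2"
  have onestep: "(norm (y (Suc i) - q))^2 \<le> (norm (y i - q))^2
      - 2 * a * (\<Sum>h<C. w i h * (f h p - f h q)) + a^2 * K" if i: "i < n" for i
  proof -
    let ?u = "y i"
    have uX: "?u \<in> X" using inX i by simp
    have "norm (y (Suc i) - q) = dist (closest_point X (?u - a *\<^sub>R v i)) (closest_point X q)"
      using ys'[OF i] closest_point_self[OF q] by (simp add: dist_norm)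
    also have "\<dots> \<le> dist (?u - a *\<^sub>R v i) q"
      by (rule closest_point_lipschitz[OF X])
    finally have n1: "norm (y (Suc i) - q) \<le> norm ((?u - q) - a *\<^sub>R v i)" by (simp add: dist_norm algebra_simps)
    have exp: "(norm ((?u - q) - a *\<^sub>R v i))^2 = (norm (?u - q))^2 - 2 * a * (v i \<bullet> (?u - q)) + a^2 * (norm (v i))^2"
      unfolding power2_norm_eq_inner by (simp add: inner_diff_left inner_diff_right inner_commute algebra_simps power2_eq_square)
    define r where "r = norm (p - ?u)"
    have Bnn: "B \<ge> 0" using B0 i by simp
    have aB: "a * B \<ge> 0" using a Bnn by simp
    have r: "r \<le> n * a * B"
    proof -
      have "r = norm (y i - p)" unfolding r_def by (simp add: norm_minus_commute)
      also have "\<dots> \<le> i * a * B" using dist i by simp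
      also have "\<dots> \<le> n * a * B" using mult_right_mono[OF _ aB, of "real i" "real n"] i
        by (simp add: mult.assoc)
      finally show ?thesis .
    qed
    have gh: "g h ?u \<bullet> (?u - q) \<ge> f h p - f h q - L h * r" if h: "h < C" for h
    proof -
      have 1: "f h q \<ge> f h ?u + g h ?u \<bullet> (q - ?u)" by (rule gi[OF h])
      have 2: "f h ?u \<ge> f h p + g h p \<bullet> (?u - p)" by (rule gi[OF h])
      have 3: "g h p \<bullet> (p - ?u) \<le> L h * r"
      proof -
        have "g h p \<bullet> (p - ?u) \<le> norm (g h p) * norm (p - ?u)" by (rule norm_cauchy_schwarz)
        also have "\<dots> \<le> L h * norm (p - ?u)" by (rule mult_right_mono[OF gb[OF h p]]) simp
        finally show ?thesis unfolding r_def .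
      qed
      have e: "g h ?u \<bullet> (?u - q) = - (g h ?u \<bullet> (q - ?u))" by (simp add: inner_diff_right)
      have e2: "g h p \<bullet> (?u - p) = - (g h p \<bullet> (p - ?u))" by (simp add: inner_diff_right)
      obtain A1 A2 A3 where A: "A1 = g h ?u \<bullet> (q - ?u)" "A2 = g h p \<bullet> (p - ?u)" "A3 = g h ?u \<bullet> (?u - q)" by blast
      have "A3 = - A1" "f h ?u + A1 \<le> f h q" "f h ?u \<ge> f h p - A2" "A2 \<le> L h * r"
        using e e2 1 2 3 A by simp_all
      hence "f h p - f h q - L h * r \<le> A3" by linarith
      thus ?thesis using A by simp
    qed
    have "v i \<bullet> (?u - q) = (\<Sum>h<C. w i h * (g h ?u \<bullet> (?u - q)))"
      unfolding v_def by (simp add: inner_sum_left)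
    also have "\<dots> \<ge> (\<Sum>h<C. w i h * (f h p - f h q - L h * r))"
      by (rule sum_mono) (use gh w i in \<open>auto intro!: mult_left_mono\<close>)
    finally have vi: "v i \<bullet> (?u - q) \<ge> (\<Sum>h<C. w i h * (f h p - f h q)) - r * (\<Sum>h<C. w i h * L h)"
      by (simp add: algebra_simps sum_subtractf sum_distrib_left sum.distrib)
    have r0: "r \<ge> 0" unfolding r_def by simp
    have "r * (\<Sum>h<C. w i h * L h) \<le> (n * a * B) * B"
    proof -
      have "r * (\<Sum>h<C. w i h * L h) \<le> r * B" by (rule mult_left_mono[OF B[OF i] r0])
      also have "\<dots> \<le> (n * a * B) * B" by (rule mult_right_mono[OF r Bnn])
      finally show ?thesis .
    qed
    hence vi2: "v i \<bullet> (?u - q) \<ge> (\<Sum>h<C. w i h * (f h p - f h q)) - n * a * B * B" using vi by linarith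
    have vsq: "(norm (v i))^2 \<le> B^2" using vB[OF i] by (simp add: power_mono)
    have "(norm (y (Suc i) - q))^2 \<le> (norm ((?u - q) - a *\<^sub>R v i))^2" using n1 by (simp add: power_mono)
    also have "\<dots> \<le> (norm (?u - q))^2 - 2 * a * ((\<Sum>h<C. w i h * (f h p - f h q)) - n * a * B * B) + a^2 * B^2"
    proof -
      have m1: "2 * a * ((\<Sum>h<C. w i h * (f h p - f h q)) - n * a * B * B) \<le> 2 * a * (v i \<bullet> (?u - q))"
        by (rule mult_left_mono[OF vi2]) (use a in simp)
      have m2: "a^2 * (norm (v i))^2 \<le> a^2 * B^2" by (rule mult_left_mono[OF vsq]) simp
      show ?thesis unfolding exp using m1 m2 by linarith
    qed
    also have "\<dots> = (norm (?u - q))^2 - 2 * a * (\<Sum>h<C. w i h * (f h p - f h q)) + a^2 * K"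
      unfolding K_def by (simp add: algebra_simps power2_eq_square)
    finally show ?thesis .
  qed
  have "\<forall>m\<le>n. (norm (y m - q))^2 \<le> (norm (p - q))^2
           - 2 * a * (\<Sum>i<m. \<Sum>h<C. w i h * (f h p - f h q)) + m * a^2 * K"
  proof (intro allI impI)
    fix m show "m \<le> n \<Longrightarrow> (norm (y m - q))^2 \<le> (norm (p - q))^2
           - 2 * a * (\<Sum>i<m. \<Sum>h<C. w i h * (f h p - f h q)) + m * a^2 * K"
    proof (induction m)
      case 0 thus ?case using y0 by simp
    next
      case (Suc m)
      thus ?case using onestep[of m] by (simp add: algebra_simps)
    qed
  qed
  thus "(norm (y n - q))^2 \<le> (norm (p - q))^2
           - 2 * a * (\<Sum>i<n. \<Sum>h<C. w i h * (f h p - f h q)) + real n * a^2 * ((2 * real n + 1) * B^2)"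
    unfolding K_def by simp
  qed
qed

lemma seq_lemma:
  fixes D \<phi> \<alpha> :: "nat \<Rightarrow> real"
  assumes D0: "\<And>k. D k \<ge> 0" and phi0: "\<And>k. \<phi> k \<ge> 0"
    and apos: "\<And>k. \<alpha> k > 0" and alim: "\<alpha> \<longlonglongrightarrow> 0" and ns: "\<not> summable \<alpha>"
    and c: "c > 0" and K: "K \<ge> 0"
    and rec: "\<And>k. D (Suc k) \<le> D k - c * \<alpha> k * \<phi> k + K * (\<alpha> k)^2"
    and sep: "\<And>\<epsilon>. \<epsilon> > 0 \<Longrightarrow> \<exists>\<delta>>0. \<forall>k. D k \<ge> \<epsilon> \<longrightarrow> \<phi> k \<ge> \<delta>"
  shows "D \<longlonglongrightarrow> 0"
proof (rule LIMSEQ_I)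
  fix e :: real assume e: "e > 0"
  define \<epsilon> where "\<epsilon> = e / 2"
  have \<epsilon>: "\<epsilon> > 0" using e \<epsilon>_def by simp
  obtain \<delta> where \<delta>: "\<delta> > 0" "\<And>k. D k \<ge> \<epsilon> \<Longrightarrow> \<phi> k \<ge> \<delta>" using sep[OF \<epsilon>] by blast
  define K' where "K' = K + 1"
  have K': "K' > 0" "K \<le> K'" using K K'_def by auto
  define \<eta> where "\<eta> = min 1 (min (c*\<delta>/(2*K')) (\<epsilon>/K'))"
  have \<eta>: "\<eta> > 0" using K' c \<delta> \<epsilon> \<eta>_def by auto
  have "eventually (\<lambda>k. \<alpha> k < \<eta>) sequentially"
    using order_tendstoD(2)[OF alim \<eta>] .
  then obtain N0 where N0: "\<And>k. k \<ge> N0 \<Longrightarrow> \<alpha> k < \<eta>" by (auto simp: eventually_sequentially)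
  have small: "K * (\<alpha> k)^2 \<le> \<epsilon>" if "k \<ge> N0" for k
  proof -
    have a1: "\<alpha> k \<le> 1" "\<alpha> k \<le> \<epsilon>/K'" using N0[OF that] \<eta>_def by auto
    have "K * (\<alpha> k)^2 \<le> K' * (\<alpha> k * 1)"
      using a1 apos[of k] K' by (simp add: power2_eq_square mult_mono)
    also have "\<dots> \<le> \<epsilon>" using a1 K' by (simp add: pos_le_divide_eq mult.commute)
    finally show ?thesis .
  qed
  have dec: "D (Suc k) \<le> D k - c * \<delta> / 2 * \<alpha> k" if "k \<ge> N0" "D k \<ge> \<epsilon>" for k
  proof -
    have a1: "\<alpha> k \<le> c*\<delta>/(2*K')" using N0[OF that(1)] \<eta>_def by auto
    have "c * \<alpha> k * \<phi> k \<ge> c * \<alpha> k * \<delta>"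
      using \<delta>(2)[OF that(2)] c apos[of k] by simp
    moreover have "K * (\<alpha> k)^2 \<le> K' * \<alpha> k * (c*\<delta>/(2*K'))"
    proof -
      have s1: "K * (\<alpha> k)^2 \<le> (K' * \<alpha> k) * \<alpha> k"
        using K'(2) apos[of k] by (simp add: power2_eq_square mult_right_mono flip: mult.assoc)
      have s2: "(K' * \<alpha> k) * \<alpha> k \<le> (K' * \<alpha> k) * (c*\<delta>/(2*K'))"
        by (rule mult_left_mono[OF a1]) (use K' apos[of k] in simp)
      show ?thesis using s1 s2 by linarith
    qed
    moreover have "K' * \<alpha> k * (c*\<delta>/(2*K')) = c * \<delta> / 2 * \<alpha> k" using K' by simp
    ultimately show ?thesis using rec[of k] by (simp add: algebra_simps)
  qed
  have "\<exists>k1\<ge>N0. D k1 < \<epsilon>"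
  proof (rule ccontr)
    assume "\<not> ?thesis"
    hence big: "\<And>k. k \<ge> N0 \<Longrightarrow> D k \<ge> \<epsilon>" by force
    have part: "D (N0 + m) \<le> D N0 - c * \<delta> / 2 * (\<Sum>j<m. \<alpha> (j + N0))" for m
    proof (induction m)
      case 0 thus ?case by simp
    next
      case (Suc m)
      have "D (N0 + Suc m) \<le> D (N0 + m) - c * \<delta> / 2 * \<alpha> (m + N0)"
        using dec[of "N0 + m"] big[of "N0+m"] by (simp add: add.commute)
      thus ?case using Suc by (simp add: algebra_simps)
    qed
    have "summable (\<lambda>j. \<alpha> (j + N0))"
    proof (rule summableI_nonneg_bounded)
      fix m show "0 \<le> \<alpha> (m + N0)" using apos[of "m+N0"] by simp
      have "c * \<delta> / 2 * (\<Sum>j<m. \<alpha> (j + N0)) \<le> D N0" using part[of m] D0[of "N0+m"] by linarith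
      thus "(\<Sum>j<m. \<alpha> (j + N0)) \<le> D N0 / (c * \<delta> / 2)"
        using c \<delta> by (simp add: field_simps)
    qed
    thus False using ns by simp
  qed
  then obtain k1 where k1: "k1 \<ge> N0" "D k1 < \<epsilon>" by blast
  have "D (k1 + m) < 2 * \<epsilon>" for m
  proof (induction m)
    case 0 thus ?case using k1 \<epsilon> by simp
  next
    case (Suc m)
    show ?case
    proof (cases "D (k1 + m) \<ge> \<epsilon>")
      case True
      have "D (Suc (k1 + m)) \<le> D (k1 + m) - c * \<delta> / 2 * \<alpha> (k1 + m)"
        using dec[OF _ True] k1 by simp
      moreover have "c * \<delta> / 2 * \<alpha> (k1 + m) \<ge> 0" using c \<delta> apos[of "k1+m"] by simp
      ultimately show ?thesis using Suc by simp
    next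
      case False
      have "c * \<alpha> (k1 + m) * \<phi> (k1 + m) \<ge> 0" using c apos[of "k1+m"] phi0[of "k1+m"] by simp
      thus ?thesis using rec[of "k1 + m"] small[of "k1 + m"] k1 False by simp
    qed
  qed
  hence "\<forall>k\<ge>k1. norm (D k - 0) < e"
    using D0 \<epsilon>_def by (metis le_add_diff_inverse real_norm_def abs_of_nonneg diff_zero
        mult_2 field_sum_of_halves)
  thus "\<exists>no. \<forall>k\<ge>no. norm (D k - 0) < e" by blast
qed

theorem theorem3:
  fixes S C \<Delta> :: nat
    and X :: "(real^'d) set"
    and f :: "nat \<Rightarrow> real^'d \<Rightarrow> real"
    and g :: "nat \<Rightarrow> real^'d \<Rightarrow> real^'d"
    and L :: "nat \<Rightarrow> real"
    and W :: "nat \<Rightarrow> nat \<Rightarrow> nat \<Rightarrow> nat \<Rightarrow> real"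
    and M :: real
    and \<alpha> :: "nat \<Rightarrow> real"
    and x :: "nat \<Rightarrow> nat \<Rightarrow> nat \<Rightarrow> real^'d"
    and x00 :: "real^'d"
  assumes "S \<ge> 1" and "C \<ge> 1" and "\<Delta> \<ge> 1"
    and "X \<noteq> {}" and "convex X" and "compact X"
    and "\<And>h. h < C \<Longrightarrow> convex_on UNIV (f h)"
    and "\<And>h y. h < C \<Longrightarrow> (f h has_derivative (\<lambda>v. g h y \<bullet> v)) (at y)"
    and "\<And>h. h < C \<Longrightarrow> continuous_on UNIV (g h)"
    and "\<And>h y. h < C \<Longrightarrow> y \<in> X \<Longrightarrow> norm (g h y) \<le> L h"
    and "\<And>i k J h. i < \<Delta> \<Longrightarrow> J < S \<Longrightarrow> h < C \<Longrightarrow> W i k J h \<ge> 0"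
    and "M > 0"
    and "\<And>k h. h < C \<Longrightarrow> (\<Sum>i<\<Delta>. \<Sum>J<S. W i k J h) = M"
    and "\<And>k. \<alpha> k > 0"
    and "\<alpha> \<longlonglongrightarrow> 0"
    and "\<not> summable \<alpha>"
    and "x00 \<in> X"
    and "\<And>J. J < S \<Longrightarrow> x J 0 0 = x00"
    and "\<And>J i k. J < S \<Longrightarrow> 1 \<le> i \<Longrightarrow> i \<le> \<Delta> \<Longrightarrow>
           x J i k = closest_point X
             (x J (i - 1) k - \<alpha> k *\<^sub>R (\<Sum>h<C. W (i - 1) k J h *\<^sub>R g h (x J (i - 1) k)))"
    and "\<And>I k. I < S \<Longrightarrow> x I 0 (Suc k) = (1 / real S) *\<^sub>R (\<Sum>J<S. x J \<Delta> k)"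
  shows "\<forall>J<S. (\<lambda>k. infdist (x J 0 k) (opt_set X (total_obj C f))) \<longlonglongrightarrow> 0
              \<and> (\<lambda>k. total_obj C f (x J 0 k)) \<longlonglongrightarrow> opt_val X (total_obj C f)"
proof -
  note A = assms
  define F where "F = total_obj C f"
  define fs where "fs = opt_val X F"
  define Xs where "Xs = opt_set X F"
  have cX: "closed X" using A(6) compact_imp_closed by blast
  have Fdef: "F u = (\<Sum>h<C. f h u)" for u unfolding F_def total_obj_def by simp
  have contf: "continuous_on UNIV (f h)" if "h < C" for h
    using has_derivative_continuous[OF A(8)[OF that]] continuous_at_imp_continuous_on by blast
  have contF: "continuous_on UNIV F"
    unfolding F_def total_obj_def by (intro continuous_on_sum) (use contf in auto)
  obtain ys where ys: "ys \<in> X" "\<And>u. u \<in> X \<Longrightarrow> F ys \<le> F u"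
    using continuous_attains_inf[OF A(6) A(4) continuous_on_subset[OF contF]] by blast
  have fs: "fs = F ys" unfolding fs_def opt_val_def
    by (rule cInf_eq_minimum) (use ys in auto)
  have Fge: "u \<in> X \<Longrightarrow> F u \<ge> fs" for u using ys fs by auto
  have XsE: "Xs = X \<inter> {u. F u = fs}" unfolding Xs_def opt_set_def fs_def by auto
  have Xsne: "Xs \<noteq> {}" using ys fs XsE by auto
  have Xsc: "compact Xs" unfolding XsE
    by (rule compact_Int_closed[OF A(6) closed_Collect_eq]) (use contF in auto)
  hence Xscl: "closed Xs" by (rule compact_imp_closed)
  have XsX: "Xs \<subseteq> X" using XsE by auto
  have gi: "f h v \<ge> f h u + g h u \<bullet> (v - u)" if "h < C" for h u v
    by (rule grad_ineq[OF A(7)[OF that] A(8)[OF that]])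
  define Ls where "Ls = (\<Sum>h<C. L h)"
  have L0: "L h \<ge> 0" if "h < C" for h using A(10)[OF that A(17)] norm_ge_zero order_trans by blast
  define B where "B = M * Ls"
  have Wle: "W i k J h \<le> M" if "i < \<Delta>" "J < S" "h < C" for i k J h
  proof -
    have "W i k J h \<le> (\<Sum>J'<S. W i k J' h)"
      by (rule member_le_sum) (use that A(11) in auto)
    also have "\<dots> \<le> (\<Sum>i'<\<Delta>. \<Sum>J'<S. W i' k J' h)"
      by (rule member_le_sum[where f = "\<lambda>i'. \<Sum>J'<S. W i' k J' h"]) (use that A(11) in \<open>auto intro!: sum_nonneg\<close>)
    finally show ?thesis using A(13)[OF that(3)] by simp
  qed
  have WB: "(\<Sum>h<C. W i k J h * L h) \<le> B" if "i < \<Delta>" "J < S" for i k J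
  proof -
    have "(\<Sum>h<C. W i k J h * L h) \<le> (\<Sum>h<C. M * L h)"
      by (rule sum_mono) (use that Wle L0 in \<open>auto intro!: mult_right_mono\<close>)
    thus ?thesis unfolding B_def Ls_def by (simp add: sum_distrib_left)
  qed
  define z where "z k = x 0 0 k" for k
  have S0: "0 < S" using A(1) by simp
  have hz: "x J 0 k = z k" if "J < S" for J k
  proof (cases k)
    case 0 thus ?thesis using A(18)[OF that] A(18)[OF S0] z_def by simp
  next
    case (Suc k') thus ?thesis using A(20)[OF that] A(20)[OF S0] z_def by simp
  qed
  define K where "K = real \<Delta> * ((2 * real \<Delta> + 1) * B^2)"
  have round: "(\<forall>i\<le>\<Delta>. x J i k \<in> X) \<and>
     (\<forall>q\<in>X. (norm (x J \<Delta> k - q))^2 \<le> (norm (z k - q))^2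
           - 2 * \<alpha> k * (\<Sum>i<\<Delta>. \<Sum>h<C. W i k J h * (f h (z k) - f h q)) + (\<alpha> k)^2 * K)"
    if J: "J < S" and zX: "z k \<in> X" for J k
  proof -
    have ys': "\<And>i. i < \<Delta> \<Longrightarrow> x J (Suc i) k = closest_point X (x J i k - \<alpha> k *\<^sub>R (\<Sum>h<C. W i k J h *\<^sub>R g h (x J i k)))"
      using A(19)[OF J] by simp
    note R = round_lemma[where y = "\<lambda>i. x J i k" and p = "z k" and n = \<Delta> and a = "\<alpha> k"
        and w = "\<lambda>i h. W i k J h" and B = B and L = L and f = f and g = g and X = X and C = C,
        OF A(5) cX A(4) zX hz[OF J] ys' less_imp_le[OF A(14)] A(11)[OF _ J] WB[OF _ J] gi A(10)]
    show ?thesis using R(1) R(3) unfolding K_def by (auto simp: algebra_simps)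
  qed
  have zX: "z k \<in> X" for k
  proof (induction k)
    case 0 thus ?case using A(17) A(18)[OF S0] z_def by simp
  next
    case (Suc k)
    have "z (Suc k) = (\<Sum>J<S. (1 / real S) *\<^sub>R x J \<Delta> k)"
      using A(20)[OF S0] z_def by (simp add: scaleR_sum_right)
    also have "\<dots> \<in> X"
      by (rule convex_sum[OF _ A(5)]) (use S0 round Suc in auto)
    finally show ?case .
  qed
  define c where "c = 2 * M / real S"
  have key: "(norm (z (Suc k) - q))^2 \<le> (norm (z k - q))^2 - c * \<alpha> k * (F (z k) - F q) + K * (\<alpha> k)^2"
    if q: "q \<in> X" for k q
  proof -
    have eq1: "z (Suc k) - q = (\<Sum>J<S. (1 / real S) *\<^sub>R (x J \<Delta> k - q))"
    proof -
      have "(\<Sum>J<S. (1 / real S) *\<^sub>R (x J \<Delta> k - q)) = (\<Sum>J<S. (1 / real S) *\<^sub>R x J \<Delta> k) - (\<Sum>J<S. (1 / real S) *\<^sub>R q)"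
        by (simp only: scaleR_diff_right sum_subtractf)
      also have "(\<Sum>J<S. (1 / real S) *\<^sub>R q) = q"
        by (simp only: sum_constant_scaleR card_lessThan scaleR_scaleR) (use S0 in simp)
      finally have e2: "(\<Sum>J<S. (1 / real S) *\<^sub>R (x J \<Delta> k - q)) = (\<Sum>J<S. (1 / real S) *\<^sub>R x J \<Delta> k) - q" .
      have e1: "z (Suc k) = (\<Sum>J<S. (1 / real S) *\<^sub>R x J \<Delta> k)"
        using A(20)[OF S0] z_def by (simp add: scaleR_sum_right)
      show ?thesis by (simp only: e1 e2)
    qed
    have "(norm (z (Suc k) - q))^2 \<le> (\<Sum>J<S. (1 / real S) * (norm (x J \<Delta> k - q))^2)"
      unfolding eq1 by (rule convex_on_sum[OF _ _ convex_norm2]) (use S0 in auto)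
    also have "\<dots> \<le> (\<Sum>J<S. (1 / real S) * ((norm (z k - q))^2
           - 2 * \<alpha> k * (\<Sum>i<\<Delta>. \<Sum>h<C. W i k J h * (f h (z k) - f h q)) + (\<alpha> k)^2 * K))"
    proof (rule sum_mono)
      fix J assume "J \<in> {..<S}"
      hence "(norm (x J \<Delta> k - q))^2 \<le> (norm (z k - q))^2
           - 2 * \<alpha> k * (\<Sum>i<\<Delta>. \<Sum>h<C. W i k J h * (f h (z k) - f h q)) + (\<alpha> k)^2 * K"
        using round[OF _ zX] q by auto
      thus "(1 / real S) * (norm (x J \<Delta> k - q))^2 \<le> (1 / real S) * ((norm (z k - q))^2
           - 2 * \<alpha> k * (\<Sum>i<\<Delta>. \<Sum>h<C. W i k J h * (f h (z k) - f h q)) + (\<alpha> k)^2 * K)"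
        by (rule mult_left_mono) simp
    qed
    also have "\<dots> = (norm (z k - q))^2 + (\<alpha> k)^2 * K
        - 2 * \<alpha> k / real S * (\<Sum>J<S. \<Sum>i<\<Delta>. \<Sum>h<C. W i k J h * (f h (z k) - f h q))"
    proof -
      define T where "T J = (\<Sum>i<\<Delta>. \<Sum>h<C. W i k J h * (f h (z k) - f h q))" for J
      define a where "a = (norm (z k - q))^2 + (\<alpha> k)^2 * K"
      have "(\<Sum>J<S. (1 / real S) * ((norm (z k - q))^2 - 2 * \<alpha> k * T J + (\<alpha> k)^2 * K))
          = (\<Sum>J<S. (1 / real S) * a - (2 * \<alpha> k / real S) * T J)"
        unfolding a_def by (rule sum.cong) (simp_all add: algebra_simps)
      also have "\<dots> = real S * ((1 / real S) * a) - (2 * \<alpha> k / real S) * (\<Sum>J<S. T J)"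
        by (simp add: sum_subtractf sum_distrib_left)
      also have "\<dots> = a - (2 * \<alpha> k / real S) * (\<Sum>J<S. T J)" using S0 by simp
      finally show ?thesis unfolding T_def a_def .
    qed
    also have "(\<Sum>J<S. \<Sum>i<\<Delta>. \<Sum>h<C. W i k J h * (f h (z k) - f h q))
        = (\<Sum>h<C. (f h (z k) - f h q) * (\<Sum>i<\<Delta>. \<Sum>J<S. W i k J h))"
    proof -
      have "(\<Sum>J<S. \<Sum>i<\<Delta>. \<Sum>h<C. W i k J h * (f h (z k) - f h q))
          = (\<Sum>i<\<Delta>. \<Sum>J<S. \<Sum>h<C. W i k J h * (f h (z k) - f h q))" by (rule sum.swap)
      also have "\<dots> = (\<Sum>i<\<Delta>. \<Sum>h<C. \<Sum>J<S. W i k J h * (f h (z k) - f h q))"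
        by (rule sum.cong[OF refl], rule sum.swap)
      also have "\<dots> = (\<Sum>h<C. \<Sum>i<\<Delta>. \<Sum>J<S. W i k J h * (f h (z k) - f h q))" by (rule sum.swap)
      also have "\<dots> = (\<Sum>h<C. (f h (z k) - f h q) * (\<Sum>i<\<Delta>. \<Sum>J<S. W i k J h))"
        by (simp add: sum_distrib_left sum_distrib_right mult.commute)
      finally show ?thesis .
    qed
    also have "\<dots> = (\<Sum>h<C. M * (f h (z k) - f h q))"
      by (rule sum.cong) (simp_all add: A(13))
    also have "\<dots> = M * (F (z k) - F q)"
      by (simp only: Fdef sum_subtractf[symmetric] sum_distrib_left)
    finally have fin: "(norm (z (Suc k) - q))^2 \<le> (norm (z k - q))^2 + (\<alpha> k)^2 * K - 2 * \<alpha> k / real S * (M * (F (z k) - F q))" .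
    have "2 * \<alpha> k / real S * (M * (F (z k) - F q)) = c * \<alpha> k * (F (z k) - F q)"
      unfolding c_def by (simp add: field_simps)
    thus ?thesis using fin by (simp add: mult.commute)
  qed
  define D where "D k = (infdist (z k) Xs)^2" for k
  define \<phi> where "\<phi> k = F (z k) - fs" for k
  have yk: "\<exists>y\<in>Xs. infdist (z k) Xs = dist (z k) y" for k
    using infdist_attains_inf[OF Xscl Xsne] by metis
  then obtain yk where yk: "\<And>k. yk k \<in> Xs" "\<And>k. infdist (z k) Xs = dist (z k) (yk k)" by metis
  have Fyk: "F (yk k) = fs" for k using yk XsE by auto
  have rec: "D (Suc k) \<le> D k - c * \<alpha> k * \<phi> k + K * (\<alpha> k)^2" for k
  proof -
    have "D (Suc k) \<le> (dist (z (Suc k)) (yk k))^2"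
      unfolding D_def by (rule power_mono[OF infdist_le[OF yk(1)] infdist_nonneg])
    also have "\<dots> \<le> (norm (z k - yk k))^2 - c * \<alpha> k * (F (z k) - F (yk k)) + K * (\<alpha> k)^2"
      using key[of "yk k" k] yk(1) XsX by (auto simp: dist_norm)
    also have "\<dots> = D k - c * \<alpha> k * \<phi> k + K * (\<alpha> k)^2"
      unfolding D_def \<phi>_def using yk(2) Fyk by (simp add: dist_norm)
    finally show ?thesis .
  qed
  have sep: "\<exists>\<delta>>0. \<forall>k. D k \<ge> \<epsilon> \<longrightarrow> \<phi> k \<ge> \<delta>" if \<epsilon>: "\<epsilon> > 0" for \<epsilon>
  proof -
    define AA where "AA = X \<inter> {u. \<epsilon> \<le> (infdist u Xs)^2}"
    have AAc: "compact AA" unfolding AA_def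
      by (rule compact_Int_closed[OF A(6) closed_Collect_le]) (auto intro!: continuous_intros)
    have "\<exists>\<delta>>0. \<forall>u\<in>AA. F u - fs \<ge> \<delta>"
    proof (cases "AA = {}")
      case True thus ?thesis by (intro exI[of _ 1]) auto
    next
      case False
      have cF': "continuous_on AA (\<lambda>u. F u - fs)"
        by (intro continuous_on_diff continuous_on_const continuous_on_subset[OF contF]) auto
      obtain a where a: "a \<in> AA" "\<And>u. u \<in> AA \<Longrightarrow> F a - fs \<le> F u - fs"
        using continuous_attains_inf[OF AAc False cF'] by blast
      have "F a \<noteq> fs"
      proof
        assume "F a = fs"
        hence "a \<in> Xs" using a(1) XsE AA_def by auto
        thus False using a(1) \<epsilon> AA_def by auto
      qed
      hence "F a - fs > 0" using Fge[of a] a(1) AA_def by auto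
      thus ?thesis using a by blast
    qed
    then obtain \<delta> where "\<delta> > 0" "\<And>u. u \<in> AA \<Longrightarrow> F u - fs \<ge> \<delta>" by blast
    thus ?thesis using zX unfolding AA_def D_def \<phi>_def by auto
  qed
  have Dlim: "D \<longlonglongrightarrow> 0"
  proof (rule seq_lemma[OF _ _ A(14) A(15) A(16) _ _ rec sep])
    show "0 < c" using A(12) S0 c_def by simp
    show "0 \<le> K" unfolding K_def by simp
  qed (auto simp: D_def \<phi>_def intro: Fge zX)
  have lim1: "(\<lambda>k. infdist (z k) Xs) \<longlonglongrightarrow> 0"
  proof -
    have "(\<lambda>k. sqrt (D k)) \<longlonglongrightarrow> sqrt 0" by (rule tendsto_real_sqrt[OF Dlim])
    moreover have "sqrt (D k) = infdist (z k) Xs" for k unfolding D_def by (simp add: infdist_nonneg)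
    ultimately show ?thesis by simp
  qed
  have lim2: "(\<lambda>k. F (z k)) \<longlonglongrightarrow> fs"
  proof -
    have uc: "uniformly_continuous_on X F"
      by (rule compact_uniformly_continuous[OF continuous_on_subset[OF contF] A(6)]) simp
    have "(\<lambda>k. dist (z k) (yk k)) \<longlonglongrightarrow> 0" using lim1 yk(2) by simp
    have ucs: "\<And>xs ys. (\<forall>n. xs n \<in> X) \<and> (\<forall>n. ys n \<in> X) \<and> (\<lambda>n. dist (xs n) (ys n)) \<longlonglongrightarrow> 0
        \<longrightarrow> (\<lambda>n. dist (F (xs n)) (F (ys n))) \<longlonglongrightarrow> 0"
      using uc unfolding uniformly_continuous_on_sequentially by blast
    have ykX: "\<forall>n. yk n \<in> X" using yk(1) XsX by blast
    have zX': "\<forall>n. z n \<in> X" using zX by blast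
    note ucs[of z yk]
    hence "(\<lambda>k. dist (F (z k)) (F (yk k))) \<longlonglongrightarrow> 0"
      using \<open>(\<lambda>k. dist (z k) (yk k)) \<longlonglongrightarrow> 0\<close> ykX zX' by blast
    hence "(\<lambda>k. dist (F (z k)) fs) \<longlonglongrightarrow> 0" using Fyk by simp
    thus ?thesis using tendsto_dist_iff by blast
  qed
  show ?thesis
  proof (intro allI impI conjI)
    fix J assume J: "J < S"
    have e: "x J 0 k = z k" for k using hz[OF J] .
    show "(\<lambda>k. infdist (x J 0 k) (opt_set X (total_obj C f))) \<longlonglongrightarrow> 0"
      using lim1 unfolding e Xs_def F_def .
    show "(\<lambda>k. total_obj C f (x J 0 k)) \<longlonglongrightarrow> opt_val X (total_obj C f)"
      using lim2 unfolding e fs_def F_def .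
  qed
qed

end
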